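(* Let $c$ and $d$ be two primitive combinatorial closed curves that are not freely homotopic. Then the sequence of double points of a double path of $(c,d)$ contains no double point more than once. Moreover, every double path of $(c,d)$ has length less than $|c|+|d|-1$.
   Context: A combinatorial closed curve $c$ of length $|c|$ has vertices $c(i)$ and arcs $c[i,i+1]$, $i\in\mathbb{Z}/|c|\mathbb{Z}$. It is primitive if its free homotopy class is not a proper power of another class. A forward index path of length $\ell$ of $c$ is $(i,i+1,\dots,i+\ell)$ (indices mod $|c|$), with image path $(c[i,i+1],\dots,c[i+\ell-1,i+\ell])$. A double point of $(c,d)$ is a pair $(i,j)\in\mathbb{Z}/|c|\mathbb{Z}\times\mathbb{Z}/|d|\mathbb{Z}$ with $c(i)=d(j)$. A double path of $(c,d)$ of length $\ell$ is a pair of forward index paths $((i,\dots,i+\ell)_c,(j,\dots,j+\ell)_d)$ with identical image paths; its sequence of double points is $(i+k,j+k)$, $k=0,\dots,\ell$. *)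

theory Defs
  imports Main
begin

text \<open>Combinatorial surfaces are modelled as combinatorial maps on a finite type
  of darts (oriented arcs): a permutation sigma rotating darts around their tail
  vertex and a fixed-point-free involution alpha reversing darts.\<close>

definition comb_map :: "('d::finite \<Rightarrow> 'd) \<Rightarrow> ('d \<Rightarrow> 'd) \<Rightarrow> bool" where
  "comb_map \<sigma> \<alpha> \<longleftrightarrow> bij \<sigma> \<and> (\<forall>x. \<alpha> (\<alpha> x) = x \<and> \<alpha> x \<noteq> x)"

text \<open>Tail vertex of a dart (its sigma-orbit); the head of x is the tail of alpha x.\<close>
definition vertex :: "('d \<Rightarrow> 'd) \<Rightarrow> 'd \<Rightarrow> 'd set" where
  "vertex \<sigma> x = {(\<sigma> ^^ n) x | n. True}"

definition face_deg :: "('d \<Rightarrow> 'd) \<Rightarrow> ('d \<Rightarrow> 'd) \<Rightarrow> 'd \<Rightarrow> nat" where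
  "face_deg \<sigma> \<alpha> x = (LEAST n. n > 0 \<and> ((\<sigma> \<circ> \<alpha>) ^^ n) x = x)"

definition face_walk :: "('d \<Rightarrow> 'd) \<Rightarrow> ('d \<Rightarrow> 'd) \<Rightarrow> 'd \<Rightarrow> 'd list" where
  "face_walk \<sigma> \<alpha> x = map (\<lambda>k. ((\<sigma> \<circ> \<alpha>) ^^ k) x) [0..<face_deg \<sigma> \<alpha> x]"

text \<open>A combinatorial closed curve c of length |c| = length c: arc c[i,i+1] is c ! i,
  vertex c(i) is the tail of c ! i; indices are taken modulo length c.\<close>
definition closed_curve :: "('d \<Rightarrow> 'd) \<Rightarrow> ('d \<Rightarrow> 'd) \<Rightarrow> 'd list \<Rightarrow> bool" where
  "closed_curve \<sigma> \<alpha> c \<longleftrightarrow> c \<noteq> [] \<and>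
     (\<forall>i < length c. vertex \<sigma> (\<alpha> (c ! i)) = vertex \<sigma> (c ! (Suc i mod length c)))"

definition htp_step :: "('d \<Rightarrow> 'd) \<Rightarrow> ('d \<Rightarrow> 'd) \<Rightarrow> 'd list \<Rightarrow> 'd list \<Rightarrow> bool" where
  "htp_step \<sigma> \<alpha> c d \<longleftrightarrow> closed_curve \<sigma> \<alpha> c \<and> closed_curve \<sigma> \<alpha> d \<and>
     ((\<exists>xs ys. c = xs @ ys \<and> d = ys @ xs) \<or>
      (\<exists>xs ys e. c = xs @ ys \<and> d = xs @ [e, \<alpha> e] @ ys) \<or>
      (\<exists>xs ys e. c = xs @ ys \<and> d = xs @ face_walk \<sigma> \<alpha> e @ ys))"

definition freely_homotopic :: "('d \<Rightarrow> 'd) \<Rightarrow> ('d \<Rightarrow> 'd) \<Rightarrow> 'd list \<Rightarrow> 'd list \<Rightarrow> bool" where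
  "freely_homotopic \<sigma> \<alpha> c d \<longleftrightarrow>
     (\<lambda>a b. htp_step \<sigma> \<alpha> a b \<or> htp_step \<sigma> \<alpha> b a)\<^sup>*\<^sup>* c d"

definition curve_power :: "'d list \<Rightarrow> nat \<Rightarrow> 'd list" where
  "curve_power w k = concat (replicate k w)"

definition primitive :: "('d \<Rightarrow> 'd) \<Rightarrow> ('d \<Rightarrow> 'd) \<Rightarrow> 'd list \<Rightarrow> bool" where
  "primitive \<sigma> \<alpha> c \<longleftrightarrow>
     \<not> (\<exists>w k. k \<ge> 2 \<and> closed_curve \<sigma> \<alpha> w \<and> freely_homotopic \<sigma> \<alpha> c (curve_power w k))"

definition double_path :: "'d list \<Rightarrow> 'd list \<Rightarrow> nat \<Rightarrow> nat \<Rightarrow> nat \<Rightarrow> bool" where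
  "double_path c d i j l \<longleftrightarrow> i < length c \<and> j < length d \<and>
     (\<forall>k < l. c ! ((i + k) mod length c) = d ! ((j + k) mod length d))"

definition dp_seq :: "'d list \<Rightarrow> 'd list \<Rightarrow> nat \<Rightarrow> nat \<Rightarrow> nat \<Rightarrow> nat \<times> nat" where
  "dp_seq c d i j k = ((i + k) mod length c, (j + k) mod length d)"

end

theory Submission
  imports Defs
begin

lemma period_mod:
  fixes p L x :: nat
  assumes p: "p > 0" and per: "\<And>x. x + p < L \<Longrightarrow> w x = w (x + p)" and "x < L"
  shows "w x = w (x mod p)"
  using assms(3)
proof (induction x rule: less_induct)
  case (less x)
  show ?case
  proof (cases "x < p")
    case True then show ?thesis by simp
  next
    case False
    then have "w (x - p) = w x" using per[of "x - p"] less.prems by simp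
    moreover have "w (x - p) = w ((x - p) mod p)" using less p False by simp
    moreover have "(x - p) mod p = x mod p" using False by (simp add: le_mod_geq)
    ultimately show ?thesis by simp
  qed
qed

lemma fine_wilf_aux:
  fixes p q L x y :: nat
  assumes "p > 0" "q > 0" "p < q" "p + q - 1 \<le> L"
    and perp: "\<And>x. x + p < L \<Longrightarrow> w x = w (x + p)"
    and perq: "\<And>x. x + q < L \<Longrightarrow> w x = w (x + q)"
    and IH: "\<And>L'. p + (q - p) - 1 \<le> L' \<Longrightarrow> (\<And>x. x + p < L' \<Longrightarrow> w x = w (x + p)) \<Longrightarrow>
         (\<And>x. x + (q - p) < L' \<Longrightarrow> w x = w (x + (q - p))) \<Longrightarrow>
         (\<forall>x y. x < L' \<longrightarrow> y < L' \<longrightarrow> x mod gcd p (q - p) = y mod gcd p (q - p) \<longrightarrow> w x = w y)"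
    and "x < L" "y < L" "x mod gcd p q = y mod gcd p q"
  shows "w x = w y"
proof -
  have g: "gcd p (q - p) = gcd p q" using assms(3)
    by (metis gcd.commute gcd_diff1_nat less_or_eq_imp_le)
  have per2: "w a = w (a + (q - p))" if "a + (q - p) < L - p" for a
  proof -
    have "a + q < L" using that assms(3) by linarith
    then have "w a = w (a + q)" by (rule perq)
    also have "a + q = a + (q - p) + p" using assms(3) by simp
    also have "a + (q - p) + p < L" using that assms(3) by linarith
    then have "w (a + (q - p)) = w (a + (q - p) + p)" by (rule perp)
    finally show ?thesis by simp
  qed
  have H: "\<forall>x y. x < L - p \<longrightarrow> y < L - p \<longrightarrow> x mod gcd p q = y mod gcd p q \<longrightarrow> w x = w y"
  proof -
    have a: "p + (q - p) - 1 \<le> L - p" using assms(3,4) by linarith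
    have b: "w x = w (x + p)" if "x + p < L - p" for x
      using that by (intro perp) linarith
    have "\<forall>x y. x < L - p \<longrightarrow> y < L - p \<longrightarrow> x mod gcd p (q - p) = y mod gcd p (q - p) \<longrightarrow> w x = w y"
      by (rule IH[OF a b per2])
    then show ?thesis by (simp only: g)
  qed
  have "w x = w (x mod p)" by (rule period_mod[of p L w x, OF assms(1) perp assms(8)])
  moreover have "w y = w (y mod p)" by (rule period_mod[of p L w y, OF assms(1) perp assms(9)])
  moreover have "x mod p < L - p" "y mod p < L - p"
  proof -
    have "x mod p < p" "y mod p < p" using assms(1) by simp_all
    moreover have "p \<le> L - p" using assms(3,4) by linarith
    ultimately show "x mod p < L - p" "y mod p < L - p" by linarith+
  qed
  moreover have "x mod p mod gcd p q = y mod p mod gcd p q"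
  proof -
    have "gcd p q dvd p" by simp
    then show ?thesis using assms(10) by (simp only: mod_mod_cancel)
  qed
  ultimately show ?thesis using H[rule_format, of "x mod p" "y mod p"] by simp
qed

lemma fine_wilf:
  fixes p q L :: nat
  assumes "p > 0" "q > 0" "p + q - 1 \<le> L"
    and "\<And>x. x + p < L \<Longrightarrow> w x = w (x + p)"
    and "\<And>x. x + q < L \<Longrightarrow> w x = w (x + q)"
  shows "\<forall>x y. x < L \<longrightarrow> y < L \<longrightarrow> x mod gcd p q = y mod gcd p q \<longrightarrow> w x = w y"
  using assms
proof (induction "p + q" arbitrary: p q L rule: less_induct)
  case less
  consider "p = q" | "p < q" | "q < p" by linarith
  then show ?case
  proof cases
    case 1
    show ?thesis
    proof (intro allI impI)
      fix x y assume xy: "x < L" "y < L" "x mod gcd p q = y mod gcd p q"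
      have "w x = w (x mod p)" by (rule period_mod[of p L w x, OF less.prems(1) less.prems(4) xy(1)])
      moreover have "w y = w (y mod p)" by (rule period_mod[of p L w y, OF less.prems(1) less.prems(4) xy(2)])
      ultimately show "w x = w y" using xy 1 by simp
    qed
  next
    case 2
    have lt: "p + (q - p) < p + q" and p0: "0 < p" and qp: "0 < q - p" using 2 less.prems(1) by auto
    have IH: "\<forall>x y. x < L' \<longrightarrow> y < L' \<longrightarrow> x mod gcd p (q - p) = y mod gcd p (q - p) \<longrightarrow> w x = w y"
      if "p + (q - p) - 1 \<le> L'" "\<And>x. x + p < L' \<Longrightarrow> w x = w (x + p)"
         "\<And>x. x + (q - p) < L' \<Longrightarrow> w x = w (x + (q - p))" for L'
      by (rule less.hyps[of p "q - p" L', OF lt p0 qp that])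
    show ?thesis
    proof (intro allI impI)
      fix x y assume xy: "x < L" "y < L" "x mod gcd p q = y mod gcd p q"
      show "w x = w y"
        by (rule fine_wilf_aux[of p q L w, OF less.prems(1,2) 2 less.prems(3,4,5) IH xy])
    qed
  next
    case 3
    have lt: "q + (p - q) < p + q" and q0: "0 < q" and pq: "0 < p - q" using 3 less.prems(2) by auto
    have IH: "\<forall>x y. x < L' \<longrightarrow> y < L' \<longrightarrow> x mod gcd q (p - q) = y mod gcd q (p - q) \<longrightarrow> w x = w y"
      if "q + (p - q) - 1 \<le> L'" "\<And>x. x + q < L' \<Longrightarrow> w x = w (x + q)"
         "\<And>x. x + (p - q) < L' \<Longrightarrow> w x = w (x + (p - q))" for L'
      by (rule less.hyps[of q "p - q" L', OF lt q0 pq that])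
    have L: "q + p - 1 \<le> L" using less.prems(3) by (simp add: add.commute)
    show ?thesis
    proof (intro allI impI)
      fix x y assume xy: "x < L" "y < L" "x mod gcd p q = y mod gcd p q"
      then have xy': "x mod gcd q p = y mod gcd q p" by (simp add: gcd.commute)
      show "w x = w y"
        by (rule fine_wilf_aux[of q p L w, OF less.prems(2,1) 3 L less.prems(5,4) IH xy(1,2) xy'])
    qed
  qed
qed

lemma power_nth:
  "length u = g \<Longrightarrow> k < a * g \<Longrightarrow> concat (replicate a u) ! k = u ! (k mod g)"
proof (induction a arbitrary: k)
  case 0 then show ?case by simp
next
  case (Suc a)
  show ?case
  proof (cases "k < g")
    case True then show ?thesis using Suc.prems by (simp add: nth_append)
  next
    case False
    then have "concat (replicate (Suc a) u) ! k = concat (replicate a u) ! (k - g)"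
      using Suc.prems by (simp add: nth_append)
    also have "\<dots> = u ! ((k - g) mod g)" using Suc False by simp
    also have "(k - g) mod g = k mod g" using False by (simp add: le_mod_geq)
    finally show ?thesis .
  qed
qed

lemma power_eq:
  assumes "length u = g" "length xs = a * g" "\<forall>k<length xs. xs ! k = u ! (k mod g)"
  shows "xs = curve_power u a"
proof (rule nth_equalityI)
  show "length xs = length (curve_power u a)"
    using assms by (simp add: curve_power_def length_concat sum_list_replicate)
  fix k assume "k < length xs"
  then show "xs ! k = curve_power u a ! k"
    using assms power_nth[of u g k a] by (simp add: curve_power_def)
qed

lemma closed_rotate:
  assumes "closed_curve \<sigma> \<alpha> c"
  shows "closed_curve \<sigma> \<alpha> (rotate i c)"
proof -
  let ?m = "length c"
  have m: "?m > 0" using assms by (simp add: closed_curve_def)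
  have "vertex \<sigma> (\<alpha> (rotate i c ! k)) = vertex \<sigma> (rotate i c ! (Suc k mod ?m))" if k: "k < ?m" for k
  proof -
    have "rotate i c ! k = c ! ((i + k) mod ?m)" using k by (simp add: nth_rotate)
    moreover have "rotate i c ! (Suc k mod ?m) = c ! ((i + Suc k mod ?m) mod ?m)"
      using m by (simp add: nth_rotate)
    moreover have "(i + Suc k mod ?m) mod ?m = Suc ((i + k) mod ?m) mod ?m"
      by (simp add: mod_add_right_eq mod_Suc_eq)
    moreover have "(i + k) mod ?m < ?m" using m by simp
    moreover have "\<forall>i < ?m. vertex \<sigma> (\<alpha> (c ! i)) = vertex \<sigma> (c ! (Suc i mod ?m))"
      using assms unfolding closed_curve_def by blast
    ultimately show ?thesis by simp
  qed
  then show ?thesis using assms by (simp add: closed_curve_def)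
qed

lemma fh_rotate:
  assumes "closed_curve \<sigma> \<alpha> c"
  shows "htp_step \<sigma> \<alpha> c (rotate i c)"
proof -
  have "rotate i c = drop (i mod length c) c @ take (i mod length c) c" by (rule rotate_drop_take)
  moreover have "c = take (i mod length c) c @ drop (i mod length c) c" by simp
  ultimately have "\<exists>xs ys. c = xs @ ys \<and> rotate i c = ys @ xs" by blast
  then show ?thesis using assms closed_rotate[OF assms] unfolding htp_step_def by simp
qed

lemma core:
  fixes \<sigma> \<alpha> :: "'d::finite \<Rightarrow> 'd" and c d :: "'d list" and i j :: nat
  assumes cc: "closed_curve \<sigma> \<alpha> c" and cd: "closed_curve \<sigma> \<alpha> d"
    and pc: "primitive \<sigma> \<alpha> c" and pd: "primitive \<sigma> \<alpha> d"
    and nh: "\<not> freely_homotopic \<sigma> \<alpha> c d"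
    and eq: "\<forall>k. c ! ((i + k) mod length c) = d ! ((j + k) mod length d)"
  shows False
proof -
  define m where "m = length c"
  define n where "n = length d"
  have m0: "m > 0" using cc by (simp add: closed_curve_def m_def)
  have n0: "n > 0" using cd by (simp add: closed_curve_def n_def)
  define F where "F k = c ! ((i + k) mod m)" for k
  define G where "G k = d ! ((j + k) mod n)" for k
  have FG: "F k = G k" for k using eq by (simp add: F_def G_def m_def n_def)
  have Fm: "F k = F (k mod m)" for k by (simp add: F_def mod_add_right_eq)
  have Gn: "G k = G (k mod n)" for k by (simp add: G_def mod_add_right_eq)
  define g where "g = gcd m n"
  have g0: "g > 0" using m0 by (simp add: g_def)
  have gm: "g dvd m" "g dvd n" by (simp_all add: g_def)
  have FW: "\<forall>x y. x < m + n \<longrightarrow> y < m + n \<longrightarrow> x mod gcd m n = y mod gcd m n \<longrightarrow> F x = F y"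
  proof (rule fine_wilf)
    show "m > 0" "n > 0" "m + n - 1 \<le> m + n" using m0 n0 by auto
    show "F x = F (x + m)" for x using Fm[of "x + m"] Fm[of x] by simp
    show "F x = F (x + n)" for x using Gn[of "x + n"] Gn[of x] FG by simp
  qed
  have Fg: "F x = F (x mod g)" for x
  proof -
    have "F x = F (x mod m)" by (rule Fm)
    also have "\<dots> = F (x mod g)"
    proof -
      have "x mod g < g" using g0 by simp
      moreover have "g \<le> m" using gm m0 by (simp add: dvd_imp_le)
      ultimately have a: "x mod g < m + n" by linarith
      have b: "x mod m < m + n" using m0 by (simp add: trans_less_add1)
      have "x mod m mod g = x mod g" using gm by (simp add: mod_mod_cancel)
      then show ?thesis using FW[rule_format, OF b a] by (simp add: g_def)
    qed
    finally show ?thesis .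
  qed
  define c' where "c' = rotate i c"
  define d' where "d' = rotate j d"
  have c'n: "k < m \<Longrightarrow> c' ! k = F k" for k by (simp add: c'_def F_def nth_rotate m_def)
  have d'n: "k < n \<Longrightarrow> d' ! k = G k" for k by (simp add: d'_def G_def nth_rotate n_def)
  have lc': "length c' = m" "length d' = n" by (simp_all add: c'_def d'_def m_def n_def)
  define u where "u = take g c'"
  have gle: "g \<le> m" "g \<le> n" using gm m0 n0 by (simp_all add: dvd_imp_le)
  have lu: "length u = g" using gle lc' by (simp add: u_def)
  have un: "k < g \<Longrightarrow> u ! k = F k" for k using gle c'n by (simp add: u_def)
  have cpow: "c' = curve_power u (m div g)"
  proof (rule power_eq[OF lu])
    show "length c' = m div g * g" using lc' gm by simp
    show "\<forall>k<length c'. c' ! k = u ! (k mod g)"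
    proof (intro allI impI)
      fix k assume "k < length c'"
      then show "c' ! k = u ! (k mod g)" using c'n[of k] un[of "k mod g"] Fg[of k] g0 lc' by simp
    qed
  qed
  have dpow: "d' = curve_power u (n div g)"
  proof (rule power_eq[OF lu])
    show "length d' = n div g * g" using lc' gm by simp
    show "\<forall>k<length d'. d' ! k = u ! (k mod g)"
    proof (intro allI impI)
      fix k assume "k < length d'"
      then show "d' ! k = u ! (k mod g)" using d'n[of k] un[of "k mod g"] Fg[of k] FG[of k] g0 lc' by simp
    qed
  qed
  have ccu: "closed_curve \<sigma> \<alpha> u"
  proof -
    have cc': "closed_curve \<sigma> \<alpha> c'" using closed_rotate[OF cc] by (simp add: c'_def)
    have "vertex \<sigma> (\<alpha> (u ! k)) = vertex \<sigma> (u ! (Suc k mod g))" if k: "k < g" for k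
    proof -
      have "vertex \<sigma> (\<alpha> (c' ! k)) = vertex \<sigma> (c' ! (Suc k mod m))"
        using cc' k gle lc' unfolding closed_curve_def by auto
      moreover have "c' ! k = u ! k" using k gle c'n[of k] un[of k] by simp
      moreover have "c' ! (Suc k mod m) = F (Suc k mod m)" using c'n[of "Suc k mod m"] m0 by simp
      moreover have "u ! (Suc k mod g) = F (Suc k mod g)" using un[of "Suc k mod g"] g0 by simp
      moreover have "F (Suc k mod m) = F (Suc k mod g)" using Fm[of "Suc k"] Fg[of "Suc k"] by simp
      ultimately show ?thesis by simp
    qed
    then show ?thesis using g0 lu unfolding closed_curve_def by auto
  qed
  have fc: "freely_homotopic \<sigma> \<alpha> c c'"
    unfolding freely_homotopic_def c'_def
    by (rule r_into_rtranclp) (simp add: fh_rotate[OF cc])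
  have fd: "htp_step \<sigma> \<alpha> d d'" unfolding d'_def using fh_rotate[OF cd] .
  have fd': "freely_homotopic \<sigma> \<alpha> d d'"
    unfolding freely_homotopic_def by (rule r_into_rtranclp) (simp add: fd)
  have m1: "m div g = 1"
  proof (rule ccontr)
    assume "m div g \<noteq> 1"
    moreover have "m div g \<noteq> 0" using gle g0 m0 by (simp add: div_eq_0_iff)
    ultimately have "m div g \<ge> 2" by linarith
    then show False using pc fc cpow ccu unfolding primitive_def by metis
  qed
  have n1: "n div g = 1"
  proof (rule ccontr)
    assume "n div g \<noteq> 1"
    moreover have "n div g \<noteq> 0" using gle g0 n0 by (simp add: div_eq_0_iff)
    ultimately have "n div g \<ge> 2" by linarith
    then show False using pd fd' dpow ccu unfolding primitive_def by metis
  qed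
  have "c' = d'" using cpow dpow m1 n1 by simp
  then have "(\<lambda>a b. htp_step \<sigma> \<alpha> a b \<or> htp_step \<sigma> \<alpha> b a) c' d" using fd by simp
  then have "freely_homotopic \<sigma> \<alpha> c d" using fc unfolding freely_homotopic_def
    by (rule rtranclp.rtrancl_into_rtrancl[rotated])
  then show False using nh by simp
qed

lemma mod_dvd_red:
  fixes a k m p :: nat
  assumes "m dvd p"
  shows "(a + k) mod m = (a + k mod p) mod m"
proof -
  obtain t where t: "p = m * t" using assms by blast
  have "a + k = a + k mod p + m * (t * (k div p))"
    using t div_mult_mod_eq[of k p] by (simp add: algebra_simps)
  then show ?thesis by (metis mod_mult_self2)
qed

lemma rep_false:
  fixes \<sigma> \<alpha> :: "'d::finite \<Rightarrow> 'd" and c d :: "'d list" and i j x y l :: nat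
  assumes cc: "closed_curve \<sigma> \<alpha> c" and cd: "closed_curve \<sigma> \<alpha> d"
    and pc: "primitive \<sigma> \<alpha> c" and pd: "primitive \<sigma> \<alpha> d"
    and nh: "\<not> freely_homotopic \<sigma> \<alpha> c d"
    and dp: "double_path c d i j l"
    and xy: "x < y" "y \<le> l"
    and em: "(i + x) mod length c = (i + y) mod length c"
    and en: "(j + x) mod length d = (j + y) mod length d"
  shows False
proof -
  define m where "m = length c"
  define n where "n = length d"
  define p where "p = y - x"
  have pm: "m dvd p" using em mod_eq_dvd_iff_nat[of "i + x" "i + y" m] xy
    by (simp add: m_def p_def)
  have pn: "n dvd p" using en mod_eq_dvd_iff_nat[of "j + x" "j + y" n] xy
    by (simp add: n_def p_def)
  have p0: "p > 0" using xy by (simp add: p_def)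
  have "c ! ((i + x + k) mod m) = d ! ((j + x + k) mod n)" for k
  proof -
    have "(i + x + k) mod m = (i + x + k mod p) mod m" by (rule mod_dvd_red[OF pm])
    moreover have "(j + x + k) mod n = (j + x + k mod p) mod n" by (rule mod_dvd_red[OF pn])
    moreover have "x + k mod p < l"
    proof -
      have "k mod p < p" using p0 by simp
      then show ?thesis using xy unfolding p_def by linarith
    qed
    then have "c ! ((i + (x + k mod p)) mod m) = d ! ((j + (x + k mod p)) mod n)"
      using dp unfolding double_path_def m_def n_def by blast
    ultimately show ?thesis by (simp add: add.assoc)
  qed
  then show False using core[OF cc cd pc pd nh, of "i + x" "j + x"] by (simp add: m_def n_def)
qed

theorem lemma19:
  fixes \<sigma> \<alpha> :: "'d::finite \<Rightarrow> 'd" and c d :: "'d list" and i j l :: nat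
  assumes "comb_map \<sigma> \<alpha>"
    and "closed_curve \<sigma> \<alpha> c" and "closed_curve \<sigma> \<alpha> d"
    and "primitive \<sigma> \<alpha> c" and "primitive \<sigma> \<alpha> d"
    and "\<not> freely_homotopic \<sigma> \<alpha> c d"
    and "double_path c d i j l"
  shows "inj_on (dp_seq c d i j) {0..l} \<and> l < length c + length d - 1"
proof
  note R = rep_false[OF assms(2-7)]
  show "inj_on (dp_seq c d i j) {0..l}"
  proof (rule inj_onI)
    fix x y assume x: "x \<in> {0..l}" and y: "y \<in> {0..l}" and e: "dp_seq c d i j x = dp_seq c d i j y"
    have e1: "(i + x) mod length c = (i + y) mod length c"
      and e2: "(j + x) mod length d = (j + y) mod length d" using e by (simp_all add: dp_seq_def)
    show "x = y"
    proof (rule ccontr)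
      assume "x \<noteq> y"
      then consider "x < y" | "y < x" by linarith
      then show False
      proof cases
        case 1 then show False using R[of x y] x y e1 e2 by simp
      next
        case 2 then show False using R[of y x] x y e1 e2 by simp
      qed
    qed
  qed
  show "l < length c + length d - 1"
  proof (rule ccontr)
    assume "\<not> l < length c + length d - 1"
    then have L: "length c + length d - 1 \<le> l" by simp
    define m where "m = length c"
    define n where "n = length d"
    have m0: "m > 0" using assms(2) by (simp add: closed_curve_def m_def)
    have n0: "n > 0" using assms(3) by (simp add: closed_curve_def n_def)
    define F where "F k = c ! ((i + k) mod m)" for k
    define G where "G k = d ! ((j + k) mod n)" for k
    have FG: "k < l \<Longrightarrow> F k = G k" for k
      using assms(7) by (simp add: F_def G_def m_def n_def double_path_def)
    have Fm: "F k = F (k mod m)" for k by (simp add: F_def mod_add_right_eq)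
    have Gn: "G k = G (k mod n)" for k by (simp add: G_def mod_add_right_eq)
    have FW: "\<forall>x y. x < l \<longrightarrow> y < l \<longrightarrow> x mod gcd m n = y mod gcd m n \<longrightarrow> F x = F y"
    proof (rule fine_wilf)
      show "m > 0" "n > 0" using m0 n0 by auto
      show "m + n - 1 \<le> l" using L by (simp add: m_def n_def)
      show "F x = F (x + m)" for x using Fm[of "x + m"] Fm[of x] by simp
      show "F x = F (x + n)" if "x + n < l" for x
        using Gn[of "x + n"] Gn[of x] FG[of x] FG[of "x + n"] that by simp
    qed
    have "c ! ((i + k) mod m) = d ! ((j + k) mod n)" for k
    proof -
      have "k mod m < m" "k mod n < n" using m0 n0 by simp_all
      moreover have "m + n - 1 \<le> l" using L by (simp add: m_def n_def)
      ultimately have a: "k mod m < l" "k mod n < l" using m0 n0 by linarith+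
      have b: "k mod m mod gcd m n = k mod n mod gcd m n" by (simp add: mod_mod_cancel)
      have "F k = F (k mod m)" by (rule Fm)
      also have "\<dots> = F (k mod n)" using FW[rule_format, OF a b] .
      also have "\<dots> = G (k mod n)" using FG a by simp
      also have "\<dots> = G k" using Gn[of k] by simp
      finally show ?thesis by (simp add: F_def G_def)
    qed
    then show False using core[OF assms(2-6), of i j] by (simp add: m_def n_def)
  qed
qed

end
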